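(* Let $m\ge 2$ and $h\ge 1$ be integers and $n'=2^{3m+h-1}-2^{2m}-2^m$. Let $\mathbf{C}_0$ be a projective binary linear $[2^{2m}-1,3m]$ code whose set of nonzero weights is $\{2^{2m-1}-2^{m-1},\,2^{2m-1},\,2^{2m-1}+2^{m-1}\}$, and let $\mathbf{C}_1$ be its simplex complementary code of dimension $3m+h$, a $[2^{3m+h}-2^{2m},\ 3m+h,\ 2^{3m+h-1}-2^{2m-1}-2^{m-1}]_2$ code with maximum weight $2^{3m+h-1}$. Then the code $\mathbf{C}'$ obtained from $\mathbf{C}_1$ by the extension construction is a minimal binary linear code with parameters $[2^{3m+h}-2^{2m}+n',\ 3m+h,\ 2^{3m+h-1}-2^{2m-1}-2^{m-1}]_2$ and maximum weight $2^{3m+h}-2^{2m}-2^m$, and it violates the Ashikhmin–Barg condition.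
   Context: Projective code: columns of a generator matrix are nonzero and pairwise distinct (binary case). Simplex complementary code of a projective binary $[n,k]$ code of dimension $K=k+h$: append $h$ zeros to the columns of a generator matrix, and take the code generated by the matrix whose columns are all nonzero vectors of $\mathbf{F}_2^K$ other than these $n$ vectors. Extension construction for a binary linear $[N,K]$ code $\mathbf{D}$ with $K\ge2$, minimum nonzero weight $w_{min}$, maximum weight $w_{max}$ and $n'=2w_{min}-w_{max}\ge1$: choose a basis $\mathbf{r}_1,\dots,\mathbf{r}_K$ with $wt(\mathbf{r}_1)=w_{max}$, $wt(\mathbf{r}_2)=w_{min}$; the extended code is generated by $(\mathbf{1},\mathbf{r}_1),(\mathbf{0},\mathbf{r}_2),\dots,(\mathbf{0},\mathbf{r}_K)$ in $\mathbf{F}_2^{n'+N}$. Minimal code: any two nonzero codewords with nested supports are equal. Ashikhmin–Barg condition (binary): $w_{min}/w_{max}>1/2$. *)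

theory Defs
  imports Complex_Main
begin

text \<open>Binary vectors of length n are represented as bool lists of length n
  (True = 1, False = 0). A binary linear code of length n is a set of such lists.\<close>

definition zero_vec :: "nat \<Rightarrow> bool list" where
  "zero_vec n = replicate n False"

definition vxor :: "bool list \<Rightarrow> bool list \<Rightarrow> bool list" where
  "vxor u v = map2 (\<noteq>) u v"

definition wt :: "bool list \<Rightarrow> nat" where
  "wt v = length (filter id v)"

definition supp :: "bool list \<Rightarrow> nat set" where
  "supp v = {i. i < length v \<and> v ! i}"

definition dot :: "bool list \<Rightarrow> bool list \<Rightarrow> bool" where
  "dot u c = odd (length (filter id (map2 (\<and>) u c)))"

definition lin_code :: "nat \<Rightarrow> bool list set \<Rightarrow> bool" where
  "lin_code n C \<longleftrightarrow> (\<forall>c\<in>C. length c = n) \<and> zero_vec n \<in> C \<and>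
     (\<forall>u\<in>C. \<forall>v\<in>C. vxor u v \<in> C)"

definition nonzero_weights :: "bool list set \<Rightarrow> nat set" where
  "nonzero_weights C = {wt c | c. c \<in> C \<and> wt c \<noteq> 0}"

definition min_wt :: "bool list set \<Rightarrow> nat" where
  "min_wt C = Min (nonzero_weights C)"

definition max_wt :: "bool list set \<Rightarrow> nat" where
  "max_wt C = Max (nonzero_weights C)"

text \<open>[n,k,d]_2 code: linear of length n, dimension k (i.e. 2^k codewords),
  minimum distance (= minimum nonzero weight) d.\<close>
definition code_params :: "bool list set \<Rightarrow> nat \<Rightarrow> nat \<Rightarrow> nat \<Rightarrow> bool" where
  "code_params C n k d \<longleftrightarrow> lin_code n C \<and> card C = 2 ^ k \<and> min_wt C = d"

text \<open>Code generated by a generator matrix with k rows, given by its list of columns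
  (each column a vector of length k): codewords are uG for u in F_2^k.\<close>
definition code_of_cols :: "nat \<Rightarrow> bool list list \<Rightarrow> bool list set" where
  "code_of_cols k cols = {map (dot u) cols | u. length u = k}"

definition lincomb :: "nat \<Rightarrow> bool list list \<Rightarrow> bool list \<Rightarrow> bool list" where
  "lincomb n rows cs =
     foldr (\<lambda>(c, r) acc. if c then vxor r acc else acc) (zip cs rows) (zero_vec n)"

definition gen_code :: "nat \<Rightarrow> bool list list \<Rightarrow> bool list set" where
  "gen_code n rows = {lincomb n rows cs | cs. length cs = length rows}"

definition projective :: "nat \<Rightarrow> bool list list \<Rightarrow> bool" where
  "projective k cols \<longleftrightarrow> distinct cols \<and>
     (\<forall>c\<in>set cols. length c = k \<and> c \<noteq> zero_vec k)"

definition simplex_comp_cols :: "nat \<Rightarrow> nat \<Rightarrow> bool list list \<Rightarrow> bool list list" where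
  "simplex_comp_cols k h cols =
     filter (\<lambda>v. v \<noteq> zero_vec (k + h) \<and> v \<notin> set (map (\<lambda>c. c @ replicate h False) cols))
       (List.n_lists (k + h) [False, True])"

definition simplex_comp :: "nat \<Rightarrow> nat \<Rightarrow> bool list list \<Rightarrow> bool list set" where
  "simplex_comp k h cols = code_of_cols (k + h) (simplex_comp_cols k h cols)"

definition ext_basis :: "bool list set \<Rightarrow> nat \<Rightarrow> nat \<Rightarrow> bool list list \<Rightarrow> bool" where
  "ext_basis D N K rs \<longleftrightarrow> length rs = K \<and> set rs \<subseteq> D \<and>
     gen_code N rs = D \<and> card D = 2 ^ K \<and>
     wt (rs ! 0) = max_wt D \<and> wt (rs ! 1) = min_wt D"

definition ext_code :: "bool list set \<Rightarrow> nat \<Rightarrow> bool list list \<Rightarrow> bool list set" where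
  "ext_code D N rs =
     (let n' = 2 * min_wt D - max_wt D in
      gen_code (n' + N)
        ((replicate n' True @ hd rs) # map (\<lambda>r. replicate n' False @ r) (tl rs)))"

definition minimal_code :: "bool list set \<Rightarrow> bool" where
  "minimal_code C \<longleftrightarrow> (\<forall>c\<in>C. \<forall>c'\<in>C. wt c \<noteq> 0 \<longrightarrow> wt c' \<noteq> 0 \<longrightarrow>
     supp c \<subseteq> supp c' \<longrightarrow> c = c')"

definition ashikhmin_barg :: "bool list set \<Rightarrow> bool" where
  "ashikhmin_barg C \<longleftrightarrow> real (min_wt C) / real (max_wt C) > 1 / 2"

end

theory Submission
  imports Defs
begin

lemma vxor_length[simp]: "length (vxor u v) = min (length u) (length v)"
  by (simp add: vxor_def)
lemma vxor_nth[simp]: "i < length u \<Longrightarrow> i < length v \<Longrightarrow> vxor u v ! i = (u!i \<noteq> v!i)"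
  by (simp add: vxor_def)
lemma zero_vec_length[simp]: "length (zero_vec n) = n" by (simp add: zero_vec_def)
lemma zero_vec_nth[simp]: "i<n \<Longrightarrow> zero_vec n ! i = False" by (simp add: zero_vec_def)

lemma lincomb_Cons: "lincomb n (r # rows) (c # cs) = (if c then vxor r (lincomb n rows cs) else lincomb n rows cs)"
  by (simp add: lincomb_def)
lemma lincomb_Nil1: "lincomb n [] cs = zero_vec n" by (simp add: lincomb_def)
lemma lincomb_Nil2: "lincomb n rows [] = zero_vec n" by (simp add: lincomb_def)

lemma length_lincomb: "\<forall>r\<in>set rows. length r = n \<Longrightarrow> length (lincomb n rows cs) = n"
proof (induction rows arbitrary: cs)
  case Nil then show ?case by (simp add: lincomb_Nil1)
next
  case (Cons r rows) then show ?case by (cases cs) (auto simp: lincomb_Nil2 lincomb_Cons)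
qed

lemma lincomb_zero: "lincomb n rows (replicate k False) = zero_vec n"
proof (induction rows arbitrary: k)
  case Nil then show ?case by (simp add: lincomb_Nil1)
next
  case (Cons r rows) then show ?case by (cases k) (auto simp: lincomb_Nil2 lincomb_Cons)
qed

lemma vxor_zero_right: "length u = n \<Longrightarrow> vxor u (zero_vec n) = u"
  by (rule nth_equalityI) auto

lemma lincomb_add: "\<forall>r\<in>set rows. length r = n \<Longrightarrow> length cs = length rows \<Longrightarrow> length ds = length rows \<Longrightarrow>
   vxor (lincomb n rows cs) (lincomb n rows ds) = lincomb n rows (map2 (\<noteq>) cs ds)"
proof (induction rows arbitrary: cs ds)
  case Nil then show ?case by (auto simp: lincomb_Nil1 vxor_zero_right)
next
  case (Cons r rows)
  obtain c cs' where c: "cs = c # cs'" using Cons.prems by (cases cs) auto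
  obtain d ds' where d: "ds = d # ds'" using Cons.prems by (cases ds) auto
  have IH: "vxor (lincomb n rows cs') (lincomb n rows ds') = lincomb n rows (map2 (\<noteq>) cs' ds')"
    using Cons c d by auto
  have l1: "length (lincomb n rows cs') = n" "length (lincomb n rows ds') = n" "length r = n"
    using Cons.prems length_lincomb by auto
  have R: "lincomb n (r # rows) (map2 (\<noteq>) cs ds) =
     (if c \<noteq> d then vxor r (vxor (lincomb n rows cs') (lincomb n rows ds'))
      else vxor (lincomb n rows cs') (lincomb n rows ds'))"
    unfolding c d IH by (simp add: lincomb_Cons)
  show ?case unfolding R unfolding c d lincomb_Cons using l1
    by (cases c; cases d) (auto intro!: nth_equalityI)
qed

lemma vxor_append: "length p = length q \<Longrightarrow> vxor (p @ r) (q @ s) = vxor p q @ vxor r s"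
  by (simp add: vxor_def)

lemma lincomb_append: "length ps = length rows \<Longrightarrow> \<forall>p\<in>set ps. length p = a \<Longrightarrow> \<forall>r\<in>set rows. length r = N \<Longrightarrow>
   lincomb (a+N) (map2 (@) ps rows) cs = lincomb a ps cs @ lincomb N rows cs"
proof (induction ps arbitrary: rows cs)
  case Nil then show ?case by (simp add: lincomb_Nil1 zero_vec_def replicate_add)
next
  case (Cons p ps)
  obtain r rows' where r: "rows = r # rows'" using Cons.prems by (cases rows) auto
  show ?case
  proof (cases cs)
    case Nil then show ?thesis by (simp add: lincomb_Nil2 zero_vec_def replicate_add)
  next
    case (Cons c cs')
    have IH: "lincomb (a+N) (map2 (@) ps rows') cs' = lincomb a ps cs' @ lincomb N rows' cs'"
      using Cons.IH Cons.prems r by auto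
    have "length (lincomb a ps cs') = a" using Cons.prems length_lincomb by auto
    then show ?thesis using Cons.prems unfolding r Cons by (simp add: lincomb_Cons IH vxor_append)
  qed
qed

lemma lincomb_zero_rows: "lincomb a (replicate k (zero_vec a)) cs = zero_vec a"
proof (induction k arbitrary: cs)
  case 0 then show ?case by (simp add: lincomb_Nil1)
next
  case (Suc k) then show ?case by (cases cs) (auto simp: lincomb_Nil2 lincomb_Cons vxor_zero_right)
qed

lemma gen_code_lin: "\<forall>r\<in>set rows. length r = n \<Longrightarrow> lin_code n (gen_code n rows)"
  unfolding lin_code_def gen_code_def
proof (intro conjI ballI)
  assume h: "\<forall>r\<in>set rows. length r = n"
  show "\<And>c. c \<in> {lincomb n rows cs |cs. length cs = length rows} \<Longrightarrow> length c = n"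
    using length_lincomb[OF h] by auto
  show "zero_vec n \<in> {lincomb n rows cs |cs. length cs = length rows}"
    by (rule CollectI, rule exI[of _ "replicate (length rows) False"]) (simp add: lincomb_zero)
  show "\<And>u v. u \<in> {lincomb n rows cs |cs. length cs = length rows} \<Longrightarrow>
       v \<in> {lincomb n rows cs |cs. length cs = length rows} \<Longrightarrow>
       vxor u v \<in> {lincomb n rows cs |cs. length cs = length rows}"
    using lincomb_add[OF h] by fastforce
qed

lemma wt_append: "wt (a @ b) = wt a + wt b" by (simp add: wt_def)
lemma wt_replicate: "wt (replicate n b) = (if b then n else 0)" by (simp add: wt_def)
lemma wt_zero_iff: "wt v = 0 \<longleftrightarrow> v = zero_vec (length v)"
  by (induct v) (auto simp: wt_def zero_vec_def)
lemma wt_card: "wt v = card (supp v)"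
  by (simp add: wt_def supp_def length_filter_conv_card)

lemma wt_sub: assumes "length a = length b" "supp a \<subseteq> supp b"
  shows "wt b = wt a + wt (vxor a b)"
proof -
  have s: "supp (vxor a b) = supp b - supp a" using assms by (auto simp: supp_def)
  have f: "finite (supp b)" by (simp add: supp_def)
  show ?thesis unfolding wt_card s using card_Diff_subset[OF finite_subset[OF assms(2) f] assms(2)]
      card_mono[OF f assms(2)] by simp
qed


lemma bool_lists_finite: "finite {cs::bool list. length cs = K}"
  using finite_lists_length_eq[of "UNIV::bool set" K] by simp
lemma bool_lists_card: "card {cs::bool list. length cs = K} = 2 ^ K"
  using card_lists_length_eq[of "UNIV::bool set" K] by simp

lemma ext_thm:
  fixes D :: "bool list set" and N K :: nat and rs :: "bool list list"
  assumes eb: "ext_basis D N K rs" and K2: "K \<ge> 2"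
    and lenD: "\<forall>c\<in>D. length c = N"
    and ne: "nonzero_weights D \<noteq> {}"
    and lt: "max_wt D < 2 * min_wt D"
  shows "minimal_code (ext_code D N rs) \<and> lin_code ((2 * min_wt D - max_wt D) + N) (ext_code D N rs)
     \<and> card (ext_code D N rs) = 2 ^ K \<and> min_wt (ext_code D N rs) = min_wt D
     \<and> max_wt (ext_code D N rs) = (2 * min_wt D - max_wt D) + max_wt D"
proof -
  define w where "w = min_wt D"
  define W where "W = max_wt D"
  define n' where "n' = 2 * w - W"
  define L where "L = {cs::bool list. length cs = K}"
  have lrs: "length rs = K" and srs: "set rs \<subseteq> D" and gD: "gen_code N rs = D"
    and cD: "card D = 2 ^ K" and w0: "wt (rs ! 0) = W" and w1: "wt (rs ! 1) = w"
    using eb unfolding ext_basis_def w_def W_def by auto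
  have finL: "finite L" unfolding L_def by (rule bool_lists_finite)
  have cL: "card L = 2 ^ K" unfolding L_def by (rule bool_lists_card)
  have rowlen: "\<forall>r\<in>set rs. length r = N" using srs lenD by auto
  have D_eq: "D = lincomb N rs ` L" using gD lrs unfolding gen_code_def L_def by auto
  have finD: "finite D" using D_eq finL by simp
  have finNW: "finite (nonzero_weights D)"
  proof -
    have "nonzero_weights D \<subseteq> wt ` D" unfolding nonzero_weights_def by auto
    then show ?thesis using finD finite_subset by blast
  qed
  have wb: "w \<le> wt c \<and> wt c \<le> W" if "c \<in> D" "wt c \<noteq> 0" for c
  proof -
    have "wt c \<in> nonzero_weights D" using that unfolding nonzero_weights_def by auto
    then show ?thesis unfolding w_def W_def min_wt_def max_wt_def using finNW by auto
  qed
  have wpos: "w > 0"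
  proof -
    have "w \<in> nonzero_weights D" unfolding w_def min_wt_def using finNW ne by (rule Min_in)
    then show ?thesis unfolding nonzero_weights_def by auto
  qed
  have inj: "inj_on (lincomb N rs) L"
    by (rule eq_card_imp_inj_on[OF finL]) (simp add: D_eq[symmetric] cD cL)
  have nz: "wt (lincomb N rs cs) \<noteq> 0" if "cs \<in> L" "cs \<noteq> replicate K False" for cs
  proof
    assume "wt (lincomb N rs cs) = 0"
    then have "lincomb N rs cs = zero_vec N"
      using wt_zero_iff length_lincomb[OF rowlen] by metis
    also have "\<dots> = lincomb N rs (replicate K False)" by (simp add: lincomb_zero)
    finally have "cs = replicate K False"
      using inj that(1) unfolding inj_on_def L_def by auto
    then show False using that by simp
  qed
  have inD: "lincomb N rs cs \<in> D" if "cs \<in> L" for cs using D_eq that by auto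
  obtain r1 r2 rs'' where rsq: "rs = r1 # r2 # rs''" using lrs K2
    by (cases rs; cases "tl rs") auto
  have wr1: "wt r1 = W" and wr2: "wt r2 = w" using w0 w1 rsq by auto
  have n'1: "n' \<ge> 1" using lt unfolding n'_def w_def W_def by simp
  define pre where "pre c = (if c then replicate n' True else replicate n' False)" for c
  define f where "f cs = pre (hd cs) @ lincomb N rs cs" for cs
  define ps where "ps = replicate n' True # replicate (K-1) (zero_vec n')"
  define rows' where "rows' = (replicate n' True @ r1) # map (\<lambda>r. replicate n' False @ r) (r2 # rs'')"
  have rows'_eq: "rows' = map2 (@) ps rs"
  proof -
    have "length (r2 # rs'') = K - 1" using lrs rsq by auto
    then show ?thesis unfolding rows'_def ps_def rsq
      by (simp add: zip_replicate1 zero_vec_def)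
  qed
  have ext_eq: "ext_code D N rs = gen_code (n' + N) rows'"
    unfolding ext_code_def Let_def rows'_def n'_def w_def W_def rsq by simp
  have lps: "length ps = length rs" using lrs K2 unfolding ps_def by auto
  have psl: "\<forall>p\<in>set ps. length p = n'" unfolding ps_def by auto
  have lin_f: "lincomb (n' + N) rows' cs = f cs" if csL: "cs \<in> L" for cs
  proof -
    obtain c cs' where c: "cs = c # cs'" using csL K2 unfolding L_def by (cases cs) auto
    have "lincomb (n' + N) rows' cs = lincomb n' ps cs @ lincomb N rs cs"
      unfolding rows'_eq by (rule lincomb_append[OF lps psl rowlen])
    also have "lincomb n' ps cs = pre c"
      unfolding c ps_def lincomb_Cons lincomb_zero_rows pre_def
      using vxor_zero_right[of "replicate n' True" n'] by (simp add: zero_vec_def)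
    finally show ?thesis unfolding f_def c by simp
  qed
  have lrows': "length rows' = K" unfolding rows'_def using lrs rsq by auto
  have C_eq: "ext_code D N rs = f ` L"
    unfolding ext_eq gen_code_def lrows' using lin_f unfolding L_def by (auto; metis)
  have rows'len: "\<forall>r\<in>set rows'. length r = n' + N"
    unfolding rows'_def using rowlen rsq by auto
  have lin: "lin_code (n' + N) (ext_code D N rs)"
    unfolding ext_eq by (rule gen_code_lin[OF rows'len])
  have lpre: "length (pre c) = n'" for c unfolding pre_def by auto
  have injf: "inj_on f L"
  proof (rule inj_onI)
    fix x y assume "x \<in> L" "y \<in> L" "f x = f y"
    then have "drop n' (f x) = drop n' (f y)" by simp
    then have "lincomb N rs x = lincomb N rs y" unfolding f_def using lpre by simp
    then show "x = y" using inj \<open>x \<in> L\<close> \<open>y \<in> L\<close> unfolding inj_on_def by blast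
  qed
  have card: "card (ext_code D N rs) = 2 ^ K"
    unfolding C_eq card_image[OF injf] cL ..
  have wtf: "wt (f cs) = (if hd cs then n' else 0) + wt (lincomb N rs cs)" for cs
    unfolding f_def pre_def wt_append by (simp add: wt_replicate)
  have nthf: "f cs ! 0 = hd cs" for cs
    unfolding f_def using lpre n'1 by (simp add: nth_append pre_def)
  have bnd: "(x!0 \<longrightarrow> n' + w \<le> wt x \<and> wt x \<le> n' + W) \<and> (\<not> x!0 \<longrightarrow> w \<le> wt x \<and> wt x \<le> W)"
    if xC: "x \<in> ext_code D N rs" and xw: "wt x \<noteq> 0" for x
  proof -
    obtain cs where cs: "cs \<in> L" "x = f cs" using xC C_eq by auto
    have "cs \<noteq> replicate K False"
    proof
      assume "cs = replicate K False"
      then have "wt x = 0" using cs K2 by (simp add: wtf lincomb_zero wt_zero_iff)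
      then show False using xw by simp
    qed
    then have "w \<le> wt (lincomb N rs cs) \<and> wt (lincomb N rs cs) \<le> W"
      using wb inD nz cs by blast
    then show ?thesis using cs wtf nthf by auto
  qed
  have finC: "finite (ext_code D N rs)" using C_eq finL by simp
  have finNW': "finite (nonzero_weights (ext_code D N rs))"
  proof -
    have "nonzero_weights (ext_code D N rs) \<subseteq> wt ` (ext_code D N rs)" unfolding nonzero_weights_def by auto
    then show ?thesis using finC finite_subset by blast
  qed
  have K1: "K - 1 = Suc (K - 2)" using K2 by simp
  have amin: "w \<in> nonzero_weights (ext_code D N rs)"
  proof -
    let ?cs = "False # True # replicate (K-2) False"
    have "?cs \<in> L" unfolding L_def using K2 by simp
    moreover have "lincomb N rs ?cs = r2"
      unfolding rsq lincomb_Cons lincomb_zero using rowlen rsq by (simp add: vxor_zero_right)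
    ultimately have "f ?cs \<in> f ` L" "wt (f ?cs) = w" using wtf[of ?cs] wr2 by auto
    then show ?thesis unfolding nonzero_weights_def C_eq using wpos by (intro CollectI exI[of _ "f ?cs"]) auto
  qed
  have amax: "n' + W \<in> nonzero_weights (ext_code D N rs)"
  proof -
    let ?cs = "True # replicate (K-1) False"
    have "?cs \<in> L" unfolding L_def using K2 by simp
    moreover have "lincomb N rs ?cs = r1"
      unfolding rsq K1 lincomb_Cons lincomb_zero using rowlen rsq by (simp add: vxor_zero_right)
    ultimately have "f ?cs \<in> f ` L" "wt (f ?cs) = n' + W" using wtf[of ?cs] wr1 by auto
    then show ?thesis unfolding nonzero_weights_def C_eq using n'1 by (intro CollectI exI[of _ "f ?cs"]) auto
  qed
  have wW: "w \<le> W"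
  proof -
    have "r2 \<in> D" using srs rsq by auto
    then show ?thesis using wb[of r2] wr2 wpos by simp
  qed
  have minw: "min_wt (ext_code D N rs) = w"
    unfolding min_wt_def
  proof (rule Min_eqI[OF finNW' _ amin])
    fix y assume "y \<in> nonzero_weights (ext_code D N rs)"
    then obtain x where "x \<in> ext_code D N rs" "wt x \<noteq> 0" "y = wt x" unfolding nonzero_weights_def by auto
    then show "w \<le> y" using bnd by fastforce
  qed
  have maxw: "max_wt (ext_code D N rs) = n' + W"
    unfolding max_wt_def
  proof (rule Max_eqI[OF finNW' _ amax])
    fix y assume "y \<in> nonzero_weights (ext_code D N rs)"
    then obtain x where "x \<in> ext_code D N rs" "wt x \<noteq> 0" "y = wt x" unfolding nonzero_weights_def by auto
    then show "y \<le> n' + W" using bnd by fastforce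
  qed
  have n'W: "n' + W = 2 * w" unfolding n'_def using lt w_def W_def by simp
  have minimal: "minimal_code (ext_code D N rs)"
    unfolding minimal_code_def
  proof (intro ballI impI)
    fix a b assume a: "a \<in> ext_code D N rs" and b: "b \<in> ext_code D N rs"
      and wa: "wt a \<noteq> 0" and wbb: "wt b \<noteq> 0" and sab: "supp a \<subseteq> supp b"
    show "a = b"
    proof (rule ccontr)
      assume ne: "a \<noteq> b"
      have la: "length a = n' + N" and lb: "length b = n' + N"
        using lin a b unfolding lin_code_def by auto
      have c: "vxor a b \<in> ext_code D N rs" using lin a b unfolding lin_code_def by auto
      have wc: "wt (vxor a b) \<noteq> 0"
      proof
        assume "wt (vxor a b) = 0"
        then have "vxor a b = zero_vec (n' + N)" using la lb wt_zero_iff by (metis min.idem vxor_length)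
        then have "\<forall>i < n' + N. a ! i = b ! i"
          by (metis la lb vxor_nth zero_vec_nth)
        then have "a = b" using la lb by (intro nth_equalityI) auto
        then show False using ne by simp
      qed
      have sum: "wt b = wt a + wt (vxor a b)" using wt_sub[OF _ sab] la lb by simp
      have p0: "0 < n' + N" using n'1 by simp
      have c0: "vxor a b ! 0 = (a ! 0 \<noteq> b ! 0)" using la lb p0 by simp
      have ab0: "a ! 0 \<longrightarrow> b ! 0" using sab la lb p0 unfolding supp_def by auto
      have Ba: "(a!0 \<longrightarrow> n' + w \<le> wt a \<and> wt a \<le> n' + W) \<and> (\<not> a!0 \<longrightarrow> w \<le> wt a \<and> wt a \<le> W)"
        using bnd a wa by blast
      have Bb: "(b!0 \<longrightarrow> n' + w \<le> wt b \<and> wt b \<le> n' + W) \<and> (\<not> b!0 \<longrightarrow> w \<le> wt b \<and> wt b \<le> W)"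
        using bnd b wbb by blast
      have Bc: "(vxor a b!0 \<longrightarrow> n' + w \<le> wt (vxor a b) \<and> wt (vxor a b) \<le> n' + W) \<and>
           (\<not> vxor a b!0 \<longrightarrow> w \<le> wt (vxor a b) \<and> wt (vxor a b) \<le> W)"
        using bnd c wc by blast
      show False using Ba Bb Bc c0 ab0 sum n'W n'1 wW wpos
        by (cases "a!0"; cases "b!0"; simp; linarith)
    qed
  qed
  show ?thesis using minimal lin card minw maxw unfolding n'_def w_def W_def by simp
qed


lemma dot_Cons[simp]: "dot (a # u) (b # v) = ((a \<and> b) \<noteq> dot u v)" by (cases a; cases b) (simp_all add: dot_def)
lemma dot_Nil1[simp]: "dot [] v = False" by (simp add: dot_def)
lemma dot_Nil2[simp]: "dot u [] = False" by (simp add: dot_def)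

lemma dot_zero: "dot u (replicate n False) = False"
proof (induction u arbitrary: n)
  case Nil then show ?case by simp
next
  case (Cons a u) then show ?case by (cases n) auto
qed

lemma dot_zero1: "dot (replicate n False) v = False"
proof (induction n arbitrary: v)
  case 0 then show ?case by simp
next
  case (Suc n) then show ?case by (cases v) auto
qed

lemma dot_pad: "length u = length c + h \<Longrightarrow> dot u (c @ replicate h False) = dot (take (length c) u) c"
proof (induction c arbitrary: u)
  case Nil then show ?case by (simp add: dot_zero)
next
  case (Cons b c) then show ?case by (cases u) auto
qed

lemma wt_map: "wt (map g xs) = length (filter g xs)"
  by (induct xs) (auto simp: wt_def)

lemma card_split_Suc: "card {v::bool list. length v = Suc n \<and> P v} =
   card {v. length v = n \<and> P (False # v)} + card {v. length v = n \<and> P (True # v)}"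
proof -
  let ?A = "{v. length v = n \<and> P (False # v)}" and ?B = "{v. length v = n \<and> P (True # v)}"
  have eq: "{v::bool list. length v = Suc n \<and> P v} = Cons False ` ?A \<union> Cons True ` ?B"
  proof (rule set_eqI)
    fix x :: "bool list"
    show "x \<in> {v. length v = Suc n \<and> P v} \<longleftrightarrow> x \<in> Cons False ` ?A \<union> Cons True ` ?B"
    proof (cases x)
      case Nil then show ?thesis by auto
    next
      case (Cons b y) then show ?thesis by (cases b) auto
    qed
  qed
  have fA: "finite ?A" by (rule finite_subset[OF _ bool_lists_finite[of n]]) auto
  have fB: "finite ?B" by (rule finite_subset[OF _ bool_lists_finite[of n]]) auto
  show ?thesis unfolding eq
    by (subst card_Un_disjoint) (auto simp: fA fB card_image)
qed

lemma card_compl: "card {v::bool list. length v = n \<and> P v} + card {v. length v = n \<and> \<not> P v} = 2 ^ n"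
proof -
  have fA: "finite {v::bool list. length v = n \<and> P v}" by (rule finite_subset[OF _ bool_lists_finite[of n]]) auto
  have fB: "finite {v::bool list. length v = n \<and> \<not> P v}" by (rule finite_subset[OF _ bool_lists_finite[of n]]) auto
  have "{v::bool list. length v = n \<and> P v} \<union> {v. length v = n \<and> \<not> P v} = {v. length v = n}" by auto
  then show ?thesis using card_Un_disjoint[OF fA fB] bool_lists_card[of n] by (simp add: disjoint_iff)
qed

lemma count_dot: "length u = n \<Longrightarrow>
  card {v. length v = n \<and> dot u v} = (if u = replicate n False then 0 else 2 ^ (n - 1))"
proof (induction u arbitrary: n)
  case Nil then show ?case by simp
next
  case (Cons a u)
  then obtain n' where n: "n = Suc n'" "length u = n'" by auto
  have IH: "card {v. length v = n' \<and> dot u v} = (if u = replicate n' False then 0 else 2 ^ (n' - 1))"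
    using Cons n by auto
  show ?case
  proof (cases a)
    case True
    have "card {v. length v = n \<and> dot (a # u) v} = card {v. length v = n' \<and> \<not> dot u v} + card {v. length v = n' \<and> dot u v}"
      unfolding n card_split_Suc using True by simp
    also have "\<dots> = 2 ^ n'" using card_compl[of n' "dot u"] by simp
    finally show ?thesis using True n by simp
  next
    case False
    have "card {v. length v = n \<and> dot (a # u) v} = card {v. length v = n' \<and> dot u v} + card {v. length v = n' \<and> dot u v}"
      unfolding n card_split_Suc using False by simp
    also have "\<dots> = (if u = replicate n' False then 0 else 2 ^ n')"
    proof (cases "u = replicate n' False")
      case True then show ?thesis using IH by simp
    next
      case F: False
      then have "n' \<ge> 1" using n by (cases n') auto
      then have "2 ^ (n' - 1) + 2 ^ (n' - 1) = (2::nat) ^ n'"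
        by (cases n') auto
      then show ?thesis using IH F by simp
    qed
    finally show ?thesis using False n by simp
  qed
qed

lemma sc_weight:
  assumes proj: "projective k cols" and lu: "length u = k + h"
  shows "wt (map (dot u) (simplex_comp_cols k h cols)) =
     card {v. length v = k + h \<and> dot u v} - wt (map (dot (take k u)) cols)"
proof -
  define pad where "pad c = c @ replicate h False" for c
  define Pad where "Pad = pad ` set cols"
  define NL where "NL = List.n_lists (k+h) [False, True]"
  have dNL: "distinct NL" unfolding NL_def by (rule distinct_n_lists) simp
  have sNL: "set NL = {v. length v = k + h}" unfolding NL_def set_n_lists by auto
  have lc: "\<forall>c\<in>set cols. length c = k" and dc: "distinct cols" using proj unfolding projective_def by auto
  have SC: "simplex_comp_cols k h cols = filter (\<lambda>v. v \<noteq> zero_vec (k+h) \<and> v \<notin> Pad) NL"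
    unfolding simplex_comp_cols_def NL_def Pad_def pad_def by simp
  have "wt (map (dot u) (simplex_comp_cols k h cols)) =
      card ({v. (v \<noteq> zero_vec (k+h) \<and> v \<notin> Pad) \<and> dot u v} \<inter> set NL)"
    unfolding SC wt_map filter_filter by (rule distinct_length_filter[OF dNL])
  also have "{v. (v \<noteq> zero_vec (k+h) \<and> v \<notin> Pad) \<and> dot u v} \<inter> set NL =
     {v. length v = k + h \<and> dot u v} - {v \<in> Pad. dot u v}"
    unfolding sNL using dot_zero[of u "k+h"] by (auto simp: zero_vec_def)
  also have "card \<dots> = card {v. length v = k + h \<and> dot u v} - card {v \<in> Pad. dot u v}"
  proof (rule card_Diff_subset)
    show "finite {v \<in> Pad. dot u v}" unfolding Pad_def by simp
    show "{v \<in> Pad. dot u v} \<subseteq> {v. length v = k + h \<and> dot u v}"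
      unfolding Pad_def pad_def using lc by auto
  qed
  also have "{v \<in> Pad. dot u v} = pad ` {c \<in> set cols. dot (take k u) c}"
    unfolding Pad_def pad_def using lc lu dot_pad[of u _ h] by auto
  also have "card \<dots> = card {c \<in> set cols. dot (take k u) c}"
    by (rule card_image) (auto simp: inj_on_def pad_def)
  also have "\<dots> = wt (map (dot (take k u)) cols)"
    unfolding wt_map using distinct_length_filter[OF dc, of "dot (take k u)"]
    by (simp add: Int_def conj_commute)
  finally show ?thesis .
qed

lemma sc_length:
  assumes proj: "projective k cols"
  shows "length (simplex_comp_cols k h cols) = 2 ^ (k + h) - Suc (length cols)"
proof -
  define pad where "pad c = c @ replicate h False" for c
  define Pad where "Pad = pad ` set cols"
  define NL where "NL = List.n_lists (k+h) [False, True]"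
  have dNL: "distinct NL" unfolding NL_def by (rule distinct_n_lists) simp
  have sNL: "set NL = {v. length v = k + h}" unfolding NL_def set_n_lists by auto
  have lc: "\<forall>c\<in>set cols. length c = k" and dc: "distinct cols"
    and nzc: "\<forall>c\<in>set cols. c \<noteq> zero_vec k" using proj unfolding projective_def by auto
  have SC: "simplex_comp_cols k h cols = filter (\<lambda>v. v \<noteq> zero_vec (k+h) \<and> v \<notin> Pad) NL"
    unfolding simplex_comp_cols_def NL_def Pad_def pad_def by simp
  have "length (simplex_comp_cols k h cols) = card ({v. v \<noteq> zero_vec (k+h) \<and> v \<notin> Pad} \<inter> set NL)"
    unfolding SC by (rule distinct_length_filter[OF dNL])
  also have "{v. v \<noteq> zero_vec (k+h) \<and> v \<notin> Pad} \<inter> set NL = {v. length v = k + h} - insert (zero_vec (k+h)) Pad"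
    unfolding sNL by auto
  also have "card \<dots> = 2 ^ (k + h) - card (insert (zero_vec (k+h)) Pad)"
  proof -
    have "insert (zero_vec (k+h)) Pad \<subseteq> {v. length v = k + h}"
      unfolding Pad_def pad_def using lc by auto
    moreover have "finite (insert (zero_vec (k+h)) Pad)" unfolding Pad_def by simp
    ultimately show ?thesis using card_Diff_subset[of "insert (zero_vec (k+h)) Pad" "{v. length v = k + h}"] bool_lists_card[of "k+h"] by simp
  qed
  also have "card (insert (zero_vec (k+h)) Pad) = Suc (length cols)"
  proof -
    have "zero_vec (k+h) \<notin> Pad"
    proof
      assume "zero_vec (k+h) \<in> Pad"
      then obtain c where c: "c \<in> set cols" "c @ replicate h False = replicate k False @ replicate h False"
        unfolding Pad_def pad_def zero_vec_def by (auto simp: replicate_add)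
      then have "c = zero_vec k" unfolding zero_vec_def by simp
      then show False using nzc c by auto
    qed
    moreover have "card Pad = length cols"
      unfolding Pad_def using card_image[of pad "set cols"] distinct_card[OF dc]
      by (auto simp: inj_on_def pad_def)
    ultimately show ?thesis unfolding Pad_def by simp
  qed
  finally show ?thesis .
qed


theorem proposition4p3:
  fixes m h :: nat and cols rs :: "bool list list"
  assumes "m \<ge> 2" and "h \<ge> 1"
    and "projective (3 * m) cols"
    and "length cols = 2 ^ (2 * m) - 1"
    and "card (code_of_cols (3 * m) cols) = 2 ^ (3 * m)"
    and "nonzero_weights (code_of_cols (3 * m) cols) =
           {2 ^ (2 * m - 1) - 2 ^ (m - 1), 2 ^ (2 * m - 1), 2 ^ (2 * m - 1) + 2 ^ (m - 1)}"
    and "ext_basis (simplex_comp (3 * m) h cols) (length (simplex_comp_cols (3 * m) h cols))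
           (3 * m + h) rs"
  shows "let C' = ext_code (simplex_comp (3 * m) h cols)
                    (length (simplex_comp_cols (3 * m) h cols)) rs;
             n' = 2 ^ (3 * m + h - 1) - 2 ^ (2 * m) - 2 ^ m
         in minimal_code C'
          \<and> code_params C' (2 ^ (3 * m + h) - 2 ^ (2 * m) + n') (3 * m + h)
               (2 ^ (3 * m + h - 1) - 2 ^ (2 * m - 1) - 2 ^ (m - 1))
          \<and> max_wt C' = 2 ^ (3 * m + h) - 2 ^ (2 * m) - 2 ^ m
          \<and> \<not> ashikhmin_barg C'"
proof -
  note m2 = assms(1) and h1 = assms(2) and proj = assms(3) and lcols = assms(4)
    and nw0 = assms(6) and eb = assms(7)
  define SC where "SC = simplex_comp_cols (3 * m) h cols"
  define D where "D = simplex_comp (3 * m) h cols"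
  define A where "A = (2::nat) ^ (2 * m - 1)"
  define B where "B = (2::nat) ^ (m - 1)"
  define t where "t = (2::nat) ^ (3 * m + h - 1)"
  define W0 where "W0 = A + B"
  define wt0 where "wt0 u' = wt (map (dot u') cols)" for u'
  have "2 * m = Suc (2 * m - 1)" using m2 by simp
  then have e2m: "(2::nat) ^ (2 * m) = 2 * A" unfolding A_def by (metis power_Suc)
  have "m = Suc (m - 1)" using m2 by simp
  then have em: "(2::nat) ^ m = 2 * B" unfolding B_def by (metis power_Suc)
  have "3 * m + h = Suc (3 * m + h - 1)" using m2 by simp
  then have eK: "(2::nat) ^ (3 * m + h) = 2 * t" unfolding t_def by (metis power_Suc)
  have "3 * m + h - 1 = (2 * m - 1) + (m + h)" using m2 by simp
  then have tA: "t = A * 2 ^ (m + h)" unfolding t_def A_def by (simp add: power_add)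
  have "(2::nat) ^ 3 \<le> 2 ^ (m + h)" by (rule power_increasing) (use m2 h1 in auto)
  then have A8: "8 * A \<le> t" unfolding tA by simp
  have BA: "B \<le> A" unfolding A_def B_def by (rule power_increasing) auto
  have B1: "1 \<le> B" unfolding B_def by simp
  have A1: "1 \<le> A" unfolding A_def by simp
  have wt0_le: "wt0 u' \<le> W0" if "length u' = 3 * m" for u'
  proof (cases "wt0 u' = 0")
    case False
    have "map (dot u') cols \<in> code_of_cols (3 * m) cols" unfolding code_of_cols_def using that by auto
    then have "wt0 u' \<in> nonzero_weights (code_of_cols (3 * m) cols)"
      unfolding nonzero_weights_def wt0_def using False wt0_def by auto
    then show ?thesis unfolding nw0 W0_def A_def B_def by auto
  qed simp
  obtain u0 where u0: "length u0 = 3 * m" "wt0 u0 = W0"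
  proof -
    have "W0 \<in> nonzero_weights (code_of_cols (3 * m) cols)" unfolding nw0 W0_def A_def B_def by simp
    then show ?thesis using that unfolding nonzero_weights_def code_of_cols_def wt0_def by auto
  qed
  have wt0_zero: "wt0 (replicate n False) = 0" for n
    unfolding wt0_def wt_map by (simp add: dot_zero1)
  have D_eq: "D = (\<lambda>u. map (dot u) SC) ` {u. length u = 3 * m + h}"
    unfolding D_def SC_def simplex_comp_def code_of_cols_def by auto
  have wD: "wt (map (dot u) SC) = (if u = replicate (3 * m + h) False then 0 else t) - wt0 (take (3 * m) u)"
    if "length u = 3 * m + h" for u
    unfolding SC_def wt0_def sc_weight[OF proj that] count_dot[OF that] t_def by simp
  have finD: "finite D" unfolding D_eq using bool_lists_finite by simp
  have finNW: "finite (nonzero_weights D)"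
  proof -
    have "nonzero_weights D \<subseteq> wt ` D" unfolding nonzero_weights_def by auto
    then show ?thesis using finD finite_subset by blast
  qed
  have bndD: "t - W0 \<le> y \<and> y \<le> t" if yN: "y \<in> nonzero_weights D" for y
  proof -
    obtain u where u: "length u = 3 * m + h" "y = wt (map (dot u) SC)" "y \<noteq> 0"
      using yN unfolding nonzero_weights_def D_eq by auto
    have "wt0 (take (3 * m) u) \<le> W0" using wt0_le u(1) by simp
    then show ?thesis using u wD[OF u(1)] by (auto split: if_splits)
  qed
  have amin: "t - W0 \<in> nonzero_weights D"
  proof -
    let ?u = "u0 @ replicate h False"
    have l: "length ?u = 3 * m + h" using u0 by simp
    have tk: "take (3 * m) ?u = u0" using u0 by simp
    have "u0 \<noteq> replicate (3 * m) False" using u0 wt0_zero W0_def B1 by auto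
    then have nz: "?u \<noteq> replicate (3 * m + h) False" using u0
      by (metis append_eq_append_conv length_replicate replicate_add)
    have "wt (map (dot ?u) SC) = t - W0" using wD[OF l] tk nz u0 by simp
    moreover have "t - W0 \<noteq> 0" using A8 BA A1 W0_def by simp
    ultimately show ?thesis unfolding nonzero_weights_def D_eq using l
      by (intro CollectI exI[of _ "map (dot ?u) SC"]) auto
  qed
  have amax: "t \<in> nonzero_weights D"
  proof -
    let ?u = "replicate (3 * m) False @ True # replicate (h - 1) False"
    have l: "length ?u = 3 * m + h" using h1 by simp
    have tk: "take (3 * m) ?u = replicate (3 * m) False" by simp
    have nz: "?u \<noteq> replicate (3 * m + h) False"
    proof
      assume "?u = replicate (3 * m + h) False"
      then have "True \<in> set (replicate (3 * m + h) False)" by (metis in_set_conv_decomp)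
      then show False by simp
    qed
    have "wt (map (dot ?u) SC) = t" using wD[OF l] tk nz wt0_zero by simp
    moreover have "t \<noteq> 0" unfolding t_def by simp
    ultimately show ?thesis unfolding nonzero_weights_def D_eq using l
      by (intro CollectI exI[of _ "map (dot ?u) SC"]) auto
  qed
  have minD: "min_wt D = t - W0" unfolding min_wt_def
    by (rule Min_eqI[OF finNW _ amin]) (use bndD in auto)
  have maxD: "max_wt D = t" unfolding max_wt_def
    by (rule Max_eqI[OF finNW _ amax]) (use bndD in auto)
  have lenD: "\<forall>c\<in>D. length c = length SC" unfolding D_eq by auto
  have neD: "nonzero_weights D \<noteq> {}" using amax by auto
  have ltD: "max_wt D < 2 * min_wt D" unfolding minD maxD W0_def using A8 BA A1 by simp
  have K2: "3 * m + h \<ge> 2" using m2 by simp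
  have E: "minimal_code (ext_code D (length SC) rs) \<and> lin_code ((2 * min_wt D - max_wt D) + length SC) (ext_code D (length SC) rs)
     \<and> card (ext_code D (length SC) rs) = 2 ^ (3 * m + h) \<and> min_wt (ext_code D (length SC) rs) = min_wt D
     \<and> max_wt (ext_code D (length SC) rs) = (2 * min_wt D - max_wt D) + max_wt D"
    by (rule ext_thm[OF eb[folded D_def SC_def] K2 lenD neD ltD])
  have lSC: "length SC = 2 * t - 2 * A"
    unfolding SC_def sc_length[OF proj] lcols eK e2m using A8 A1 by simp
  have n'eq: "2 * min_wt D - max_wt D = 2 ^ (3 * m + h - 1) - 2 ^ (2 * m) - 2 ^ m"
    unfolding minD maxD e2m em t_def[symmetric] W0_def using A8 BA A1 by simp
  have ab: "\<not> ashikhmin_barg (ext_code D (length SC) rs)"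
  proof -
    have mx: "max_wt (ext_code D (length SC) rs) = 2 * (t - W0)"
      using E unfolding minD maxD W0_def using A8 BA A1 by simp
    have mn: "min_wt (ext_code D (length SC) rs) = t - W0" using E minD by simp
    have pos: "t - W0 > 0" unfolding W0_def using A8 BA A1 by simp
    show ?thesis unfolding ashikhmin_barg_def mx mn using pos by simp
  qed
  show ?thesis
    unfolding Let_def D_def[symmetric] SC_def[symmetric] code_params_def
    using E ab n'eq lSC
    unfolding minD maxD eK e2m em t_def[symmetric] A_def[symmetric] B_def[symmetric] W0_def
    using A8 BA A1 by (simp add: add.commute)
qed

end
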